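(* Let $X$ be a Polish space, $g,h:X\to\mathbb R$ and $\varepsilon>0$. For every closed set $P$, \[\delta(gh,\varepsilon,P)\subseteq\delta_h(g,\tfrac{\varepsilon}{2},P)\cup\delta_g(h,\tfrac{\varepsilon}{2},P),\] and hence, for every countable ordinal $\alpha$, \[\delta^{\omega^\alpha}(gh,\varepsilon,P)\subseteq\delta_h^{\omega^\alpha}(g,\tfrac{\varepsilon}{2},P)\cup\delta_g^{\omega^\alpha}(h,\tfrac{\varepsilon}{2},P).\]
   Context: For real functions $u,v$ on $X$, $\eta>0$ and closed $P$, $O_u(v,\eta,P)$ is the set of $x\in P$ such that every open neighbourhood $U$ of $x$ contains some $y\in U\cap P$ with $|v(y)-v(x)|\,(|u(y)|\vee|u(x)|)\ge\eta$, and $\delta_u(v,\eta,P)=\overline{O_u(v,\eta,P)}$; with $u\equiv1$ this is written $\delta(v,\eta,P)$. Iterates of a derivation $P\mapsto\delta(P)$: $\delta^0(P)=P$, $\delta^{\alpha+1}(P)=\delta(\delta^\alpha(P))$, intersections at limit ordinals; $\delta_u^\alpha(v,\eta,P)$ denotes the $\alpha$-th iterate of $\delta_u(v,\eta,\cdot)$ applied to $P$. *)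

theory Defs
  imports "HOL-Analysis.Analysis"
begin

definition osc_set ::
  "('a::topological_space \<Rightarrow> real) \<Rightarrow> ('a \<Rightarrow> real) \<Rightarrow> real \<Rightarrow> 'a set \<Rightarrow> 'a set" where
  "osc_set u v \<eta> P =
     {x \<in> P. \<forall>U. open U \<and> x \<in> U \<longrightarrow>
        (\<exists>y \<in> U \<inter> P. \<bar>v y - v x\<bar> * max \<bar>u y\<bar> \<bar>u x\<bar> \<ge> \<eta>)}"

definition delta_u ::
  "('a::topological_space \<Rightarrow> real) \<Rightarrow> ('a \<Rightarrow> real) \<Rightarrow> real \<Rightarrow> 'a set \<Rightarrow> 'a set" where
  "delta_u u v \<eta> P = closure (osc_set u v \<eta> P)"

definition delta :: "('a::topological_space \<Rightarrow> real) \<Rightarrow> real \<Rightarrow> 'a set \<Rightarrow> 'a set" where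
  "delta v \<eta> P = delta_u (\<lambda>_. 1) v \<eta> P"

text \<open>Every countable ordinal is the value of some Brouwer tree and every tree
denotes a countable ordinal: Zero = 0, Succ a = a+1, Lim f = sup_n (f n).\<close>
datatype cord = Zero | Succ cord | Lim "nat \<Rightarrow> cord"

primrec nat_ord :: "nat \<Rightarrow> cord" where
  "nat_ord 0 = Zero"
| "nat_ord (Suc n) = Succ (nat_ord n)"

definition omega :: cord where "omega = Lim nat_ord"

primrec ord_add :: "cord \<Rightarrow> cord \<Rightarrow> cord" where
  "ord_add a Zero = a"
| "ord_add a (Succ b) = Succ (ord_add a b)"
| "ord_add a (Lim f) = Lim (\<lambda>n. ord_add a (f n))"

primrec ord_mult :: "cord \<Rightarrow> cord \<Rightarrow> cord" where
  "ord_mult a Zero = Zero"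
| "ord_mult a (Succ b) = ord_add (ord_mult a b) a"
| "ord_mult a (Lim f) = Lim (\<lambda>n. ord_mult a (f n))"

primrec omega_pow :: "cord \<Rightarrow> cord" where
  "omega_pow Zero = Succ Zero"
| "omega_pow (Succ b) = ord_mult (omega_pow b) omega"
| "omega_pow (Lim f) = Lim (\<lambda>n. omega_pow (f n))"

primrec iter :: "('a set \<Rightarrow> 'a set) \<Rightarrow> cord \<Rightarrow> 'a set \<Rightarrow> 'a set" where
  "iter D Zero P = P"
| "iter D (Succ a) P = D (iter D a P)"
| "iter D (Lim f) P = (\<Inter>n. iter D (f n) P)"

end

theory Submission
  imports Defs
begin


definition valid :: "('a::topological_space set \<Rightarrow> 'a set) \<Rightarrow> bool" where
 "valid D \<longleftrightarrow> (\<forall>A B. A \<subseteq> B \<longrightarrow> D A \<subseteq> D B) \<and> (\<forall>P. closed P \<longrightarrow> closed (D P) \<and> D P \<subseteq> P)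
     \<and> (\<forall>A B. closed A \<longrightarrow> closed B \<longrightarrow> D (A \<union> B) \<subseteq> D A \<union> D B)"

lemma validD:
  assumes "valid D"
  shows "A \<subseteq> B \<Longrightarrow> D A \<subseteq> D B" "closed P \<Longrightarrow> closed (D P)" "closed P \<Longrightarrow> D P \<subseteq> P"
    "closed A \<Longrightarrow> closed B \<Longrightarrow> D (A \<union> B) \<subseteq> D A \<union> D B"
  using assms unfolding valid_def by (metis, metis, metis, metis)

lemma iter_mono: "valid D \<Longrightarrow> A \<subseteq> B \<Longrightarrow> iter D a A \<subseteq> iter D a B"
proof (induction a)
  case Zero then show ?case by simp
next
  case (Succ a) then show ?case using validD(1)[of D] by simp
next
  case (Lim f) then show ?case by auto
qed

lemma iter_closed: "valid D \<Longrightarrow> closed P \<Longrightarrow> closed (iter D a P) \<and> iter D a P \<subseteq> P"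
proof (induction a)
  case Zero then show ?case by simp
next
  case (Succ a) then show ?case using validD(2,3)[of D "iter D a P"] by auto
next
  case (Lim f) then show ?case by (auto intro!: closed_INT)
qed

inductive cle :: "bool \<Rightarrow> cord \<Rightarrow> cord \<Rightarrow> bool" where
  "cle True Zero b"
| "cle False a b \<Longrightarrow> cle True (Succ a) b"
| "(\<And>n. cle True (f n) b) \<Longrightarrow> cle True (Lim f) b"
| "cle True a b \<Longrightarrow> cle False a (Succ b)"
| "cle False a (g n) \<Longrightarrow> cle False a (Lim g)"

lemma cle_sem:
  assumes "cle t a b" "valid D" "closed P"
  shows "iter D b P \<subseteq> (if t then iter D a P else D (iter D a P))"
  using assms(1)
proof (induction rule: cle.induct)
  case (1 b) then show ?case using iter_closed[OF assms(2,3)] by simp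
next
  case (2 a b) then show ?case by simp
next
  case (3 f b) then show ?case by auto
next
  case (4 a b) then show ?case using validD(1)[OF assms(2)] by simp
next
  case (5 a g n) then show ?case by auto
qed

lemma cle_Z: "cle True Zero b" by (rule cle.intros)
lemma cle_S: "cle True b a \<or> cle False a b \<Longrightarrow> cle True (Succ a) b \<or> cle False b (Succ a)"
  by (metis cle.intros(2,4))
lemma cle_L: "(\<And>n. cle True (f n) b \<or> cle False b (f n)) \<Longrightarrow> cle True (Lim f) b \<or> cle False b (Lim f)"
  by (metis cle.intros(3,5))

lemma cle_total: "(cle True a b \<or> cle False b a) \<and> (cle True b a \<or> cle False a b)"
proof (induction a arbitrary: b)
  case Zero
  show ?case
  proof (induction b)
    case Zero then show ?case using cle_Z by simp
  next
    case (Succ b) then show ?case using cle_Z cle_S by simp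
  next
    case (Lim g) then show ?case using cle_Z cle_L[of g Zero] by simp
  qed
next
  case (Succ a)
  note O = Succ.IH
  show ?case
  proof (induction b)
    case Zero then show ?case using cle_Z cle_S O by simp
  next
    case (Succ b) then show ?case using cle_S[of "Succ b" a] cle_S[of "Succ a" b] O by simp
  next
    case (Lim g) then show ?case using cle_S[of "Lim g" a] cle_L[of g "Succ a"] O by simp
  qed
next
  case (Lim f)
  note O = Lim.IH
  show ?case
  proof (induction b)
    case Zero then show ?case using cle_Z cle_L[of f Zero] O by simp
  next
    case (Succ b) then show ?case using cle_S[of "Lim f" b] cle_L[of f "Succ b"] O by simp
  next
    case (Lim g) then show ?case using cle_L[of g "Lim f"] cle_L[of f "Lim g"] O by simp
  qed
qed

lemma cle_sub:
  assumes "valid D" "closed P"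
  shows "cle True a b \<or> cle False a b \<Longrightarrow> iter D b P \<subseteq> iter D a P"
  using cle_sem[OF _ assms, of True a b] cle_sem[OF _ assms, of False a b]
    validD(3)[OF assms(1), of "iter D a P"] iter_closed[OF assms] by auto

lemma distrib:
  assumes "valid D1" "valid D2" "closed P1" "closed P2"
  shows "(\<Inter>n. iter D1 (c n) P1 \<union> iter D2 (c n) P2) \<subseteq> (\<Inter>n. iter D1 (c n) P1) \<union> (\<Inter>n. iter D2 (c n) P2)"
proof
  fix x assume x: "x \<in> (\<Inter>n. iter D1 (c n) P1 \<union> iter D2 (c n) P2)"
  show "x \<in> (\<Inter>n. iter D1 (c n) P1) \<union> (\<Inter>n. iter D2 (c n) P2)"
  proof (rule ccontr)
    assume "\<not> ?thesis"
    then obtain k j where k: "x \<notin> iter D1 (c k) P1" and j: "x \<notin> iter D2 (c j) P2" by auto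
    from cle_total[of "c k" "c j"] have "cle True (c k) (c j) \<or> cle False (c j) (c k)" by blast
    then show False
    proof
      assume "cle True (c k) (c j)"
      then have "iter D1 (c j) P1 \<subseteq> iter D1 (c k) P1" using cle_sub[OF assms(1,3)] by blast
      then show False using x k j by blast
    next
      assume "cle False (c j) (c k)"
      then have "iter D2 (c k) P2 \<subseteq> iter D2 (c j) P2" using cle_sub[OF assms(2,4)] by blast
      then show False using x k j by blast
    qed
  qed
qed

lemma iter_subadd: "valid D \<Longrightarrow> closed A \<Longrightarrow> closed B \<Longrightarrow> iter D a (A \<union> B) \<subseteq> iter D a A \<union> iter D a B"
proof (induction a)
  case Zero then show ?case by simp
next
  case (Succ a)
  have "iter D (Succ a) (A \<union> B) \<subseteq> D (iter D a A \<union> iter D a B)"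
    using Succ validD(1)[of D] by simp
  also have "\<dots> \<subseteq> D (iter D a A) \<union> D (iter D a B)"
    using validD(4)[OF Succ.prems(1) iter_closed[OF Succ.prems(1,2), THEN conjunct1] iter_closed[OF Succ.prems(1,3), THEN conjunct1]] .
  finally show ?case by simp
next
  case (Lim f)
  have "iter D (Lim f) (A \<union> B) \<subseteq> (\<Inter>n. iter D (f n) A \<union> iter D (f n) B)" using Lim by auto
  also have "\<dots> \<subseteq> (\<Inter>n. iter D (f n) A) \<union> (\<Inter>n. iter D (f n) B)" by (rule distrib[OF Lim.prems(1,1,2,3)])
  finally show ?case by simp
qed

lemma iter_valid: assumes "valid D" shows "valid (iter D a)"
  unfolding valid_def using iter_mono[OF assms] iter_closed[OF assms] iter_subadd[OF assms] by simp

lemma funpow_props: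
  fixes E :: "'a::topological_space set \<Rightarrow> 'a set"
  assumes "valid E"
  shows "valid (E ^^ n)"
proof (induction n)
  case 0 then show ?case by (simp add: valid_def)
next
  case (Suc n)
  have v: "valid (E ^^ n)" by fact
  show ?case unfolding valid_def
  proof (intro conjI allI impI)
    fix A B :: "'a set" assume "A \<subseteq> B" then show "(E ^^ Suc n) A \<subseteq> (E ^^ Suc n) B"
      using validD(1)[OF v] validD(1)[OF assms] by simp
  next
    fix P :: "'a set" assume c: "closed P"
    show "closed ((E ^^ Suc n) P)" using validD(2)[OF v c] validD(2)[OF assms] by simp
    show "(E ^^ Suc n) P \<subseteq> P" using validD(2,3)[OF v c] validD(3)[OF assms] by force
  next
    fix A B :: "'a set" assume c: "closed A" "closed B"
    have "(E ^^ Suc n) (A \<union> B) \<subseteq> E ((E ^^ n) A \<union> (E ^^ n) B)"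
      using validD(4)[OF v c] validD(1)[OF assms] by simp
    also have "\<dots> \<subseteq> (E ^^ Suc n) A \<union> (E ^^ Suc n) B"
      using validD(4)[OF assms] validD(2)[OF v] c by simp
    finally show "(E ^^ Suc n) (A \<union> B) \<subseteq> (E ^^ Suc n) A \<union> (E ^^ Suc n) B" .
  qed
qed

lemma iter_add: "iter D (ord_add x y) P = iter D y (iter D x P)"
  by (induction y) auto

lemma iter_mult: "iter D (ord_mult a (nat_ord n)) P = (iter D a ^^ n) P"
  by (induction n) (auto simp: iter_add)

lemma iter_omega_succ: "iter D (omega_pow (Succ b)) P = (\<Inter>n. (iter D (omega_pow b) ^^ n) P)"
  by (simp add: omega_def iter_mult)

lemma finite_lemma:
  assumes E: "valid E" and E1: "valid E1" and E2: "valid E2"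
    and H: "\<And>P. closed P \<Longrightarrow> E P \<subseteq> E1 P \<union> E2 P"
  shows "m + n = k \<Longrightarrow> closed P \<Longrightarrow> (E ^^ Suc k) P \<subseteq> (E1 ^^ Suc m) P \<union> (E2 ^^ Suc n) P"
proof (induction k arbitrary: m n P)
  case 0 then show ?case using H by simp
next
  case (Suc k)
  have vk: "valid (E ^^ Suc k)" by (rule funpow_props[OF E])
  have c1: "closed (E1 P)" "closed (E2 P)" "E1 P \<subseteq> P" "E2 P \<subseteq> P"
    using Suc.prems(2) validD[OF E1] validD[OF E2] by auto
  have "(E ^^ Suc (Suc k)) P = (E ^^ Suc k) (E P)" by (simp add: funpow_Suc_right del: funpow.simps)
  also have "\<dots> \<subseteq> (E ^^ Suc k) (E1 P \<union> E2 P)" using validD(1)[OF vk] H Suc.prems(2) by blast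
  also have "\<dots> \<subseteq> (E ^^ Suc k) (E1 P) \<union> (E ^^ Suc k) (E2 P)" using validD(4)[OF vk] c1 by blast
  also have "\<dots> \<subseteq> (E1 ^^ Suc m) P \<union> (E2 ^^ Suc n) P"
  proof -
    have a: "(E ^^ Suc k) (E1 P) \<subseteq> (E1 ^^ Suc m) P \<union> (E2 ^^ Suc n) P"
    proof (cases m)
      case 0 then show ?thesis using validD(3)[OF vk c1(1)] by auto
    next
      case (Suc m')
      then have "(E ^^ Suc k) (E1 P) \<subseteq> (E1 ^^ Suc m') (E1 P) \<union> (E2 ^^ Suc n) (E1 P)"
        using Suc.IH[of m' n "E1 P"] Suc.prems c1 by simp
      moreover have "(E1 ^^ Suc m') (E1 P) = (E1 ^^ Suc m) P" using Suc by (simp add: funpow_Suc_right del: funpow.simps)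
      moreover have "(E2 ^^ Suc n) (E1 P) \<subseteq> (E2 ^^ Suc n) P"
        using validD(1)[OF funpow_props[OF E2]] c1 by blast
      ultimately show ?thesis by blast
    qed
    have b: "(E ^^ Suc k) (E2 P) \<subseteq> (E1 ^^ Suc m) P \<union> (E2 ^^ Suc n) P"
    proof (cases n)
      case 0 then show ?thesis using validD(3)[OF vk c1(2)] by auto
    next
      case (Suc n')
      then have "(E ^^ Suc k) (E2 P) \<subseteq> (E1 ^^ Suc m) (E2 P) \<union> (E2 ^^ Suc n') (E2 P)"
        using Suc.IH[of m n' "E2 P"] Suc.prems c1 by simp
      moreover have "(E2 ^^ Suc n') (E2 P) = (E2 ^^ Suc n) P" using Suc by (simp add: funpow_Suc_right del: funpow.simps)
      moreover have "(E1 ^^ Suc m) (E2 P) \<subseteq> (E1 ^^ Suc m) P"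
        using validD(1)[OF funpow_props[OF E1]] c1 by blast
      ultimately show ?thesis by blast
    qed
    from a b show ?thesis by blast
  qed
  finally show ?case .
qed

lemma main_abstract:
  assumes D: "valid D" and D1: "valid D1" and D2: "valid D2"
    and H: "\<And>P. closed P \<Longrightarrow> D P \<subseteq> D1 P \<union> D2 P"
  shows "closed P \<Longrightarrow> iter D (omega_pow a) P \<subseteq> iter D1 (omega_pow a) P \<union> iter D2 (omega_pow a) P"
proof (induction a arbitrary: P)
  case Zero then show ?case using H by simp
next
  case (Lim f)
  have "iter D (omega_pow (Lim f)) P \<subseteq> (\<Inter>n. iter D1 (omega_pow (f n)) P \<union> iter D2 (omega_pow (f n)) P)"
    using Lim by auto
  also have "\<dots> \<subseteq> (\<Inter>n. iter D1 (omega_pow (f n)) P) \<union> (\<Inter>n. iter D2 (omega_pow (f n)) P)" by (rule distrib[OF D1 D2 Lim.prems Lim.prems])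
  finally show ?case by simp
next
  case (Succ b)
  let ?E = "iter D (omega_pow b)" and ?E1 = "iter D1 (omega_pow b)" and ?E2 = "iter D2 (omega_pow b)"
  let ?c = "\<lambda>n. ord_mult (omega_pow b) (nat_ord n)"
  have step: "iter D (omega_pow (Succ b)) P \<subseteq> iter D1 (?c n) P \<union> iter D2 (?c n) P" for n
  proof (cases n)
    case 0 then show ?thesis using iter_closed[OF D Succ.prems, of "omega_pow (Succ b)"] by simp
  next
    case (Suc k)
    have "iter D (omega_pow (Succ b)) P \<subseteq> (?E ^^ Suc (k+k)) P" by (simp only: iter_omega_succ) blast
    also have "\<dots> \<subseteq> (?E1 ^^ Suc k) P \<union> (?E2 ^^ Suc k) P"
      by (rule finite_lemma[OF iter_valid[OF D] iter_valid[OF D1] iter_valid[OF D2] Succ.IH _ Succ.prems]) auto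
    finally show ?thesis using Suc by (simp only: iter_mult)
  qed
  have "iter D (omega_pow (Succ b)) P \<subseteq> (\<Inter>n. iter D1 (?c n) P \<union> iter D2 (?c n) P)"
    using step by blast
  also have "\<dots> \<subseteq> (\<Inter>n. iter D1 (?c n) P) \<union> (\<Inter>n. iter D2 (?c n) P)"
    by (rule distrib[OF D1 D2 Succ.prems Succ.prems])
  finally show ?case by (simp add: omega_def)
qed


lemma osc_sub: "osc_set u v \<eta> A \<subseteq> A"
  unfolding osc_set_def by (rule Collect_restrict)

lemma osc_mono:
  assumes "A \<subseteq> B" shows "osc_set u v \<eta> A \<subseteq> osc_set u v \<eta> B"
proof
  fix x assume x: "x \<in> osc_set u v \<eta> A"
  show "x \<in> osc_set u v \<eta> B" unfolding osc_set_def
  proof (intro CollectI conjI allI impI)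
    show "x \<in> B" using x assms unfolding osc_set_def by auto
  next
    fix U :: "'a set" assume "open U \<and> x \<in> U"
    then obtain y where "y \<in> U \<inter> A" "\<bar>v y - v x\<bar> * max \<bar>u y\<bar> \<bar>u x\<bar> \<ge> \<eta>"
      using x unfolding osc_set_def by auto
    then show "\<exists>y\<in>U \<inter> B. \<eta> \<le> \<bar>v y - v x\<bar> * max \<bar>u y\<bar> \<bar>u x\<bar>" using assms by auto
  qed
qed
lemma osc_out:
  assumes "closed A" "x \<notin> osc_set u v \<eta> A"
  shows "\<exists>U. open U \<and> x \<in> U \<and> (\<forall>y\<in>U \<inter> A. \<bar>v y - v x\<bar> * max \<bar>u y\<bar> \<bar>u x\<bar> < \<eta>)"
proof (cases "x \<in> A")
  case True
  then show ?thesis using assms(2) unfolding osc_set_def by (auto simp: not_le)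
next
  case False
  then show ?thesis using assms(1) by (intro exI[of _ "- A"]) (auto simp: open_Compl)
qed


lemma osc_subadd:
  assumes "closed A" "closed B"
  shows "osc_set u v \<eta> (A \<union> B) \<subseteq> osc_set u v \<eta> A \<union> osc_set u v \<eta> B"
proof
  fix x assume x: "x \<in> osc_set u v \<eta> (A \<union> B)"
  show "x \<in> osc_set u v \<eta> A \<union> osc_set u v \<eta> B"
  proof (rule ccontr)
    assume "\<not> ?thesis"
    then have n1: "x \<notin> osc_set u v \<eta> A" and n2: "x \<notin> osc_set u v \<eta> B" by auto
    obtain U1 where U1: "open U1" "x \<in> U1" "\<forall>y\<in>U1 \<inter> A. \<bar>v y - v x\<bar> * max \<bar>u y\<bar> \<bar>u x\<bar> < \<eta>"
      using osc_out[OF assms(1) n1] by blast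
    obtain U2 where U2: "open U2" "x \<in> U2" "\<forall>y\<in>U2 \<inter> B. \<bar>v y - v x\<bar> * max \<bar>u y\<bar> \<bar>u x\<bar> < \<eta>"
      using osc_out[OF assms(2) n2] by blast
    have "open (U1 \<inter> U2) \<and> x \<in> U1 \<inter> U2" using U1 U2 by auto
    then obtain y where y: "y \<in> U1 \<inter> U2 \<inter> (A \<union> B)" "\<bar>v y - v x\<bar> * max \<bar>u y\<bar> \<bar>u x\<bar> \<ge> \<eta>"
      using x unfolding osc_set_def by auto
    show False
    proof (cases "y \<in> A")
      case True
      then have "y \<in> U1 \<inter> A" using y(1) by auto
      then have "\<bar>v y - v x\<bar> * max \<bar>u y\<bar> \<bar>u x\<bar> < \<eta>" using U1(3) by (rule bspec[rotated])
      then show ?thesis using y(2) by linarith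
    next
      case False
      then have "y \<in> U2 \<inter> B" using y(1) by auto
      then have "\<bar>v y - v x\<bar> * max \<bar>u y\<bar> \<bar>u x\<bar> < \<eta>" using U2(3) by (rule bspec[rotated])
      then show ?thesis using y(2) by linarith
    qed
  qed
qed

lemma arith: "\<bar>a*b - c*d\<bar> \<le> \<bar>a-c\<bar> * max \<bar>b\<bar> \<bar>d\<bar> + \<bar>b-d\<bar> * max \<bar>a\<bar> \<bar>c\<bar>" for a b c d :: real
proof -
  have "a*b - c*d = (a-c)*b + c*(b-d)" by (simp add: algebra_simps)
  then have "\<bar>a*b - c*d\<bar> \<le> \<bar>a-c\<bar>*\<bar>b\<bar> + \<bar>c\<bar>*\<bar>b-d\<bar>" by (simp add: abs_mult[symmetric] abs_triangle_ineq)
  also have "\<dots> \<le> \<bar>a-c\<bar> * max \<bar>b\<bar> \<bar>d\<bar> + \<bar>b-d\<bar> * max \<bar>a\<bar> \<bar>c\<bar>"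
    by (intro add_mono) (simp_all add: mult_left_mono mult.commute[of "\<bar>c\<bar>"] mult_left_mono[of "\<bar>c\<bar>" "max \<bar>a\<bar> \<bar>c\<bar>"])
  finally show ?thesis .
qed

lemma base_osc:
  assumes e: "\<epsilon> > 0"
  shows "osc_set (\<lambda>_. 1) (\<lambda>x. g x * h x) \<epsilon> P \<subseteq> osc_set h g (\<epsilon>/2) P \<union> osc_set g h (\<epsilon>/2) P"
proof
  fix x assume x: "x \<in> osc_set (\<lambda>_. 1) (\<lambda>x. g x * h x) \<epsilon> P"
  then have xP: "x \<in> P" unfolding osc_set_def by auto
  show "x \<in> osc_set h g (\<epsilon>/2) P \<union> osc_set g h (\<epsilon>/2) P"
  proof (rule ccontr)
    assume "\<not> ?thesis"
    then have n1: "x \<notin> osc_set h g (\<epsilon>/2) P" and n2: "x \<notin> osc_set g h (\<epsilon>/2) P" by auto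
    obtain U1 where U1: "open U1" "x \<in> U1" "\<forall>y\<in>U1 \<inter> P. \<bar>g y - g x\<bar> * max \<bar>h y\<bar> \<bar>h x\<bar> < \<epsilon>/2"
      using n1 xP unfolding osc_set_def by (auto simp: not_le)
    obtain U2 where U2: "open U2" "x \<in> U2" "\<forall>y\<in>U2 \<inter> P. \<bar>h y - h x\<bar> * max \<bar>g y\<bar> \<bar>g x\<bar> < \<epsilon>/2"
      using n2 xP unfolding osc_set_def by (auto simp: not_le)
    have "open (U1 \<inter> U2) \<and> x \<in> U1 \<inter> U2" using U1 U2 by auto
    then obtain y where y: "y \<in> U1 \<inter> U2 \<inter> P" "\<bar>g y * h y - g x * h x\<bar> * max \<bar>1::real\<bar> \<bar>1\<bar> \<ge> \<epsilon>"
      using x unfolding osc_set_def by auto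
    have "\<bar>g y - g x\<bar> * max \<bar>h y\<bar> \<bar>h x\<bar> < \<epsilon>/2" "\<bar>h y - h x\<bar> * max \<bar>g y\<bar> \<bar>g x\<bar> < \<epsilon>/2"
      using U1(3) U2(3) y(1) by auto
    moreover have "\<bar>g y * h y - g x * h x\<bar> \<ge> \<epsilon>" using y(2) by simp
    ultimately show False using arith[of "g y" "h y" "g x" "h x"] by linarith
  qed
qed


lemma delta_u_valid: "valid (delta_u u v \<eta>)"
  unfolding valid_def delta_u_def
proof (intro conjI allI impI)
  fix A B :: "'a set" assume "A \<subseteq> B"
  then show "closure (osc_set u v \<eta> A) \<subseteq> closure (osc_set u v \<eta> B)"
    by (intro closure_mono osc_mono)
next
  fix P :: "'a set" assume c: "closed P"
  show "closed (closure (osc_set u v \<eta> P))" by simp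
  show "closure (osc_set u v \<eta> P) \<subseteq> P" by (rule closure_minimal[OF osc_sub c])
next
  fix A B :: "'a set" assume c: "closed A" "closed B"
  have "closure (osc_set u v \<eta> (A \<union> B)) \<subseteq> closure (osc_set u v \<eta> A \<union> osc_set u v \<eta> B)"
    by (intro closure_mono osc_subadd c)
  then show "closure (osc_set u v \<eta> (A \<union> B)) \<subseteq> closure (osc_set u v \<eta> A) \<union> closure (osc_set u v \<eta> B)"
    by (simp add: closure_Un)
qed

theorem proposition4p4:
  fixes g h :: "'a::polish_space \<Rightarrow> real" and \<epsilon> :: real
  assumes "\<epsilon> > 0"
  shows "(\<forall>P. closed P \<longrightarrow>
            delta (\<lambda>x. g x * h x) \<epsilon> P
              \<subseteq> delta_u h g (\<epsilon>/2) P \<union> delta_u g h (\<epsilon>/2) P)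
       \<and> (\<forall>P \<alpha>. closed P \<longrightarrow>
            iter (delta (\<lambda>x. g x * h x) \<epsilon>) (omega_pow \<alpha>) P
              \<subseteq> iter (delta_u h g (\<epsilon>/2)) (omega_pow \<alpha>) P
                \<union> iter (delta_u g h (\<epsilon>/2)) (omega_pow \<alpha>) P)"
proof -
  have base: "delta (\<lambda>x. g x * h x) \<epsilon> P \<subseteq> delta_u h g (\<epsilon>/2) P \<union> delta_u g h (\<epsilon>/2) P" for P
  proof -
    have "delta (\<lambda>x. g x * h x) \<epsilon> P \<subseteq> closure (osc_set h g (\<epsilon>/2) P \<union> osc_set g h (\<epsilon>/2) P)"
      unfolding delta_def delta_u_def by (intro closure_mono base_osc assms)
    then show ?thesis unfolding delta_u_def by (simp add: closure_Un)
  qed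
  have vD: "valid (delta (\<lambda>x. g x * h x) \<epsilon>)"
  proof -
    have "delta (\<lambda>x. g x * h x) \<epsilon> = delta_u (\<lambda>_. 1) (\<lambda>x. g x * h x) \<epsilon>"
      by (rule ext) (simp add: delta_def)
    then show ?thesis using delta_u_valid by metis
  qed
  show ?thesis
  proof (intro conjI allI impI)
    fix P :: "'a set" assume "closed P" then show "delta (\<lambda>x. g x * h x) \<epsilon> P
              \<subseteq> delta_u h g (\<epsilon>/2) P \<union> delta_u g h (\<epsilon>/2) P" using base by simp
  next
    fix P :: "'a set" and \<alpha> assume "closed P"
    then show "iter (delta (\<lambda>x. g x * h x) \<epsilon>) (omega_pow \<alpha>) P
              \<subseteq> iter (delta_u h g (\<epsilon>/2)) (omega_pow \<alpha>) P
                \<union> iter (delta_u g h (\<epsilon>/2)) (omega_pow \<alpha>) P"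
      by (rule main_abstract[OF vD delta_u_valid delta_u_valid base])
  qed
qed

end
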